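(* Let $\mathcal{X}$ be Polish with a lower semicontinuous metric $d$, $\theta:[0,\infty)\to[0,\infty)$ convex with $\theta(0)=0$, and $\mu$ a Borel probability measure on $\mathcal{X}$ such that $\mathcal{T}_{\theta(d)}(\nu,\mu)\le H(\nu|\mu)$ for all Borel probability measures $\nu$ on $\mathcal{X}$. Then $(\mu,\tilde c)$ satisfies Property $(\tau)$, where $\tilde c(x,y)=2\theta\big(d(x,y)/2\big)$.
   Context: $\mathcal{T}_{\theta(d)}(\nu,\mu)=\inf_\pi\int\theta(d(x,y))\,d\pi(x,y)$ over couplings $\pi$ of $\nu,\mu$; $H(\nu|\mu)=\int\log\frac{d\nu}{d\mu}d\nu$ if $\nu\ll\mu$, $+\infty$ otherwise. For a cost $c$ and bounded measurable $f$, $Q_cf(x)=\inf_{y}\{f(y)+c(x,y)\}$; $(\mu,c)$ satisfies Property $(\tau)$ if $\big(\int e^{Q_cf}d\mu\big)\big(\int e^{-f}d\mu\big)\le1$ for all bounded measurable $f:\mathcal{X}\to\mathbb{R}$. *)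

theory Defs
  imports "HOL-Probability.Probability"
begin

definition is_metric :: "('a \<Rightarrow> 'a \<Rightarrow> real) \<Rightarrow> bool" where
  "is_metric d \<longleftrightarrow>
     (\<forall>x y. 0 \<le> d x y) \<and> (\<forall>x y. d x y = 0 \<longleftrightarrow> x = y) \<and>
     (\<forall>x y. d x y = d y x) \<and> (\<forall>x y z. d x z \<le> d x y + d y z)"

definition lsc2 :: "('a::topological_space \<Rightarrow> 'a \<Rightarrow> real) \<Rightarrow> bool" where
  "lsc2 d \<longleftrightarrow> (\<forall>t. open {p :: 'a \<times> 'a. t < d (fst p) (snd p)})"

definition borel_prob :: "'a::topological_space measure \<Rightarrow> bool" where
  "borel_prob M \<longleftrightarrow> sets M = sets borel \<and> prob_space M"

definition couplings :: "'a::topological_space measure \<Rightarrow> 'a measure \<Rightarrow> ('a \<times> 'a) measure set" where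
  "couplings \<nu> \<mu> = {\<pi>. sets \<pi> = sets (borel \<Otimes>\<^sub>M borel) \<and> prob_space \<pi> \<and>
       distr \<pi> borel fst = \<nu> \<and> distr \<pi> borel snd = \<mu>}"

definition transport_cost ::
  "('a::topological_space \<Rightarrow> 'a \<Rightarrow> real) \<Rightarrow> 'a measure \<Rightarrow> 'a measure \<Rightarrow> ennreal" where
  "transport_cost c \<nu> \<mu> = (INF \<pi>\<in>couplings \<nu> \<mu>. \<integral>\<^sup>+ p. ennreal (c (fst p) (snd p)) \<partial>\<pi>)"

text \<open>The integral is taken as (positive part) - (negative part), the negative part being
  always finite for probability measures.\<close>
definition rel_entropy :: "'a measure \<Rightarrow> 'a measure \<Rightarrow> ereal" where
  "rel_entropy \<nu> \<mu> =
     (if absolutely_continuous \<mu> \<nu> then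
        enn2ereal (\<integral>\<^sup>+ x. ennreal (ln (enn2real (RN_deriv \<mu> \<nu> x))) \<partial>\<nu>)
        - enn2ereal (\<integral>\<^sup>+ x. ennreal (- ln (enn2real (RN_deriv \<mu> \<nu> x))) \<partial>\<nu>)
      else \<infinity>)"

definition Qc :: "('a \<Rightarrow> 'a \<Rightarrow> real) \<Rightarrow> ('a \<Rightarrow> real) \<Rightarrow> 'a \<Rightarrow> real" where
  "Qc c f x = (INF y. f y + c x y)"

definition property_tau :: "'a::topological_space measure \<Rightarrow> ('a \<Rightarrow> 'a \<Rightarrow> real) \<Rightarrow> bool" where
  "property_tau \<mu> c \<longleftrightarrow>
     (\<forall>f. f \<in> borel_measurable borel \<and> bounded (range f) \<longrightarrow>
        (\<integral>\<^sup>+ x. ennreal (exp (Qc c f x)) \<partial>\<mu>) * (\<integral>\<^sup>+ x. ennreal (exp (- f x)) \<partial>\<mu>) \<le> 1)"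

end

theory Submission
  imports Defs
begin


lemma lemA:
  fixes d :: "'a::polish_space \<Rightarrow> 'a \<Rightarrow> real" and \<theta> :: "real \<Rightarrow> real" and \<mu> :: "'a measure"
  assumes th0: "\<forall>t\<ge>0. 0 \<le> \<theta> t" and dpos: "\<forall>x y. 0 \<le> d x y"
    and mu: "borel_prob \<mu>"
    and hyp: "\<forall>\<nu>. borel_prob \<nu> \<longrightarrow>
           enn2ereal (transport_cost (\<lambda>x y. \<theta> (d x y)) \<nu> \<mu>) \<le> rel_entropy \<nu> \<mu>"
    and u: "u \<in> borel_measurable borel" and w: "w \<in> borel_measurable borel"
    and ub: "\<forall>x. \<bar>u x\<bar> \<le> B" and wb: "\<forall>x. \<bar>w x\<bar> \<le> B"
    and uw: "\<forall>x z. u x + w z \<le> \<theta> (d x z)"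
  shows "(\<integral>x. exp (u x) \<partial>\<mu>) \<le> exp (- (\<integral>z. w z \<partial>\<mu>))"
proof -
  have smu: "sets \<mu> = sets borel" and pmu: "prob_space \<mu>" using mu by (auto simp: borel_prob_def)
  interpret P: prob_space \<mu> by (rule pmu)
  have um[measurable]: "u \<in> borel_measurable \<mu>" using u by (subst measurable_cong_sets[OF smu refl]) simp
  have wm[measurable]: "w \<in> borel_measurable \<mu>" using w by (subst measurable_cong_sets[OF smu refl]) simp
  define Z where "Z = (\<integral>x. exp (u x) \<partial>\<mu>)"
  have ieu: "integrable \<mu> (\<lambda>x. exp (u x))"
    by (rule P.integrable_const_bound[where B="exp B"]) (use ub in \<open>auto intro!: AE_I2 simp: abs_le_iff\<close>)
  have "(\<integral>x. exp (-B) \<partial>\<mu>) \<le> Z" unfolding Z_def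
    by (rule integral_mono[OF _ ieu]) (auto, smt (verit) ub)
  hence "exp (-B) \<le> Z" by (simp add: P.prob_space)
  then have Zpos: "Z > 0" using exp_gt_zero[of "-B"] by linarith
  define f where "f = (\<lambda>x. ennreal (exp (u x) / Z))"
  have fm[measurable]: "f \<in> borel_measurable \<mu>" unfolding f_def by measurable
  define \<nu> where "\<nu> = density \<mu> f"
  have snu: "sets \<nu> = sets borel" unfolding \<nu>_def using smu by simp
  have "(\<integral>\<^sup>+x. f x \<partial>\<mu>) = ennreal (\<integral>x. exp (u x) / Z \<partial>\<mu>)"
    unfolding f_def by (rule nn_integral_eq_integral) (use ieu Zpos in auto)
  also have "\<dots> = 1" using Zpos unfolding Z_def by simp
  finally have f1: "(\<integral>\<^sup>+x. f x \<partial>\<mu>) = 1" .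
  have pnu: "prob_space \<nu>"
    apply (rule prob_spaceI) unfolding \<nu>_def
    using f1 by (simp add: emeasure_density)
  interpret N: prob_space \<nu> by (rule pnu)
  have bnu: "borel_prob \<nu>" using snu pnu by (simp add: borel_prob_def)
  have ac: "absolutely_continuous \<mu> \<nu>" unfolding \<nu>_def by (rule absolutely_continuousI_density[OF fm])
  have "AE x in \<mu>. f x = RN_deriv \<mu> \<nu> x"
    by (rule RN_deriv_unique_sigma_finite[OF fm]) (auto simp: \<nu>_def intro: prob_space_imp_sigma_finite pnu[unfolded \<nu>_def])
  hence "AE x in \<nu>. f x = RN_deriv \<mu> \<nu> x" unfolding \<nu>_def using AE_density[OF fm] by auto
  hence AEln: "AE x in \<nu>. ln (enn2real (RN_deriv \<mu> \<nu> x)) = u x - ln Z"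
  proof eventually_elim
    fix x assume h: "f x = RN_deriv \<mu> \<nu> x"
    have "enn2real (RN_deriv \<mu> \<nu> x) = exp (u x) / Z" using h[symmetric] Zpos by (simp add: f_def)
    thus "ln (enn2real (RN_deriv \<mu> \<nu> x)) = u x - ln Z" using Zpos by (simp add: ln_div)
  qed
  have um2[measurable]: "u \<in> borel_measurable \<nu>" using u by (subst measurable_cong_sets[OF snu refl]) simp
  have iu: "integrable \<nu> (\<lambda>x. u x - ln Z)"
    by (rule N.integrable_const_bound[where B="B + \<bar>ln Z\<bar>"]) (auto intro!: AE_I2, smt (verit) ub)
  have re: "rel_entropy \<nu> \<mu> = ereal ((\<integral>x. u x \<partial>\<nu>) - ln Z)"
  proof -
    have "rel_entropy \<nu> \<mu> = enn2ereal (\<integral>\<^sup>+ x. ennreal (u x - ln Z) \<partial>\<nu>)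
        - enn2ereal (\<integral>\<^sup>+ x. ennreal (- (u x - ln Z)) \<partial>\<nu>)"
      unfolding rel_entropy_def using ac
      apply simp
      apply (intro arg_cong2[where f="\<lambda>a b. enn2ereal a - enn2ereal b"] nn_integral_cong_AE)
      using AEln by (auto elim!: eventually_mono)
    also have "\<dots> = ereal (\<integral>x. u x - ln Z \<partial>\<nu>)"
    proof -
      have a: "(\<integral>\<^sup>+ x. ennreal (u x - ln Z) \<partial>\<nu>) \<noteq> \<infinity>" and b: "(\<integral>\<^sup>+ x. ennreal (- (u x - ln Z)) \<partial>\<nu>) \<noteq> \<infinity>"
        using iu unfolding real_integrable_def by auto
      show ?thesis unfolding real_lebesgue_integral_def[OF iu]
        using a b by (cases "(\<integral>\<^sup>+ x. ennreal (u x - ln Z) \<partial>\<nu>)"; cases "(\<integral>\<^sup>+ x. ennreal (- (u x - ln Z)) \<partial>\<nu>)") auto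
    qed
    also have "(\<integral>x. u x - ln Z \<partial>\<nu>) = (\<integral>x. u x \<partial>\<nu>) - ln Z"
      using iu N.prob_space by (subst Bochner_Integration.integral_diff) (auto intro!: N.integrable_const_bound[where B=B] AE_I2 simp: ub)
    finally show ?thesis .
  qed
  define A where "A = (\<integral>x. u x \<partial>\<nu>) + (\<integral>z. w z \<partial>\<mu>)"
  have "ennreal A \<le> transport_cost (\<lambda>x y. \<theta> (d x y)) \<nu> \<mu>"
    unfolding transport_cost_def
  proof (rule INF_greatest)
    fix \<pi> assume "\<pi> \<in> couplings \<nu> \<mu>"
    hence sp: "sets \<pi> = sets (borel \<Otimes>\<^sub>M borel)" and pp: "prob_space \<pi>"
      and d1: "distr \<pi> borel fst = \<nu>" and d2: "distr \<pi> borel snd = \<mu>"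
      unfolding couplings_def by auto
    interpret Q: prob_space \<pi> by (rule pp)
    have fstm[measurable]: "fst \<in> measurable \<pi> borel"
      by (subst measurable_cong_sets[OF sp refl]) (rule measurable_fst)
    have sndm[measurable]: "snd \<in> measurable \<pi> borel"
      by (subst measurable_cong_sets[OF sp refl]) (rule measurable_snd)
    have i1: "(\<integral>x. u x \<partial>\<nu>) = (\<integral>p. u (fst p) \<partial>\<pi>)"
      unfolding d1[symmetric] by (rule integral_distr[OF fstm u])
    have i2: "(\<integral>x. w x \<partial>\<mu>) = (\<integral>p. w (snd p) \<partial>\<pi>)"
      unfolding d2[symmetric] by (rule integral_distr[OF sndm w])
    define F where "F = (\<lambda>p. u (fst p) + w (snd p))"
    have Fm[measurable]: "F \<in> borel_measurable \<pi>" unfolding F_def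
      using u w fstm sndm by measurable
    have iF1: "integrable \<pi> (\<lambda>p. u (fst p))"
      by (rule Q.integrable_const_bound[where B=B]) (use ub fstm u in \<open>auto intro!: AE_I2\<close>)
    have iF2: "integrable \<pi> (\<lambda>p. w (snd p))"
      by (rule Q.integrable_const_bound[where B=B]) (use wb sndm w in \<open>auto intro!: AE_I2\<close>)
    have iF: "integrable \<pi> F" unfolding F_def using iF1 iF2 by simp
    have iFm: "integrable \<pi> (\<lambda>p. max 0 (F p))"
      using iF by (intro integrable_max) auto
    have "A = (\<integral>p. F p \<partial>\<pi>)" unfolding A_def i1 i2 F_def using iF1 iF2 by simp
    also have "\<dots> \<le> (\<integral>p. max 0 (F p) \<partial>\<pi>)" by (rule integral_mono[OF iF iFm]) auto
    finally have "ennreal A \<le> ennreal (\<integral>p. max 0 (F p) \<partial>\<pi>)" by (rule ennreal_leI)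
    also have "\<dots> = (\<integral>\<^sup>+p. ennreal (max 0 (F p)) \<partial>\<pi>)"
      by (rule nn_integral_eq_integral[symmetric]) (use iFm in auto)
    also have "\<dots> \<le> (\<integral>\<^sup>+p. ennreal (\<theta> (d (fst p) (snd p))) \<partial>\<pi>)"
      apply (rule nn_integral_mono) using uw th0 dpos unfolding F_def
      by (auto intro!: ennreal_leI)
    finally show "ennreal A \<le> (\<integral>\<^sup>+p. ennreal (\<theta> (d (fst p) (snd p))) \<partial>\<pi>)" .
  qed
  hence "enn2ereal (ennreal A) \<le> enn2ereal (transport_cost (\<lambda>x y. \<theta> (d x y)) \<nu> \<mu>)"
    by (simp add: less_eq_ennreal.rep_eq)
  moreover have "ereal A \<le> enn2ereal (ennreal A)"
    by (cases "A \<ge> 0") (auto simp: enn2ereal_nonneg intro: order_trans[OF _ enn2ereal_nonneg])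
  ultimately have "ereal A \<le> rel_entropy \<nu> \<mu>" using hyp bnu by (meson order_trans)
  hence "A \<le> (\<integral>x. u x \<partial>\<nu>) - ln Z" unfolding re by simp
  hence "ln Z \<le> - (\<integral>z. w z \<partial>\<mu>)" unfolding A_def by simp
  hence "exp (ln Z) \<le> exp (- (\<integral>z. w z \<partial>\<mu>))" by simp
  thus ?thesis using Zpos unfolding Z_def by simp
qed



lemma th_mono:
  fixes \<theta> :: "real \<Rightarrow> real"
  assumes cv: "convex_on {0..} \<theta>" and t0: "\<theta> 0 = 0" and tp: "\<forall>t\<ge>0. 0 \<le> \<theta> t"
    and "0 \<le> s" "s \<le> t"
  shows "\<theta> s \<le> \<theta> t"
proof (cases "t = 0")
  case True then show ?thesis using assms by simp
next
  case False
  hence tpos: "t > 0" using assms by simp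
  have "\<theta> ((1 - s/t) *\<^sub>R 0 + (s/t) *\<^sub>R t) \<le> (1 - s/t) * \<theta> 0 + (s/t) * \<theta> t"
    by (rule convex_onD[OF cv]) (use assms tpos in auto)
  hence "\<theta> s \<le> (s/t) * \<theta> t" using tpos t0 by simp
  also have "\<dots> \<le> \<theta> t"
  proof (rule mult_left_le_one_le)
    show "0 \<le> \<theta> t" using tp tpos by simp
    show "0 \<le> s / t" using assms tpos by simp
    show "s / t \<le> 1" using assms tpos by simp
  qed
  finally show ?thesis .
qed

lemma th_mid:
  fixes \<theta> :: "real \<Rightarrow> real"
  assumes cv: "convex_on {0..} \<theta>" and "0 \<le> a" "0 \<le> b"
  shows "2 * \<theta> ((a + b) / 2) \<le> \<theta> a + \<theta> b"
proof -
  have h: "\<theta> ((1 - 1/2) *\<^sub>R a + (1/2) *\<^sub>R b) \<le> (1 - 1/2) * \<theta> a + (1/2) * \<theta> b"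
    by (rule convex_onD[OF cv]) (use assms in auto)
  have e: "(1 - 1/2) *\<^sub>R a + (1/2) *\<^sub>R b = (a + b) / 2" by simp
  have "\<theta> ((a + b) / 2) \<le> (1 - 1/2) * \<theta> a + (1/2) * \<theta> b" using h unfolding e .
  thus ?thesis by simp
qed

lemma th_lsc:
  fixes \<theta> :: "real \<Rightarrow> real" and d :: "'a::topological_space \<Rightarrow> 'a \<Rightarrow> real"
  assumes cv: "convex_on {0..} \<theta>" and t0: "\<theta> 0 = 0" and tp: "\<forall>t\<ge>0. 0 \<le> \<theta> t"
    and dpos: "\<forall>x y. 0 \<le> d x y" and lsc: "lsc2 d"
  shows "open {p :: 'a \<times> 'a. c < \<theta> (d (fst p) (snd p))}"
proof (subst open_subopen, intro ballI)
  fix p :: "'a \<times> 'a" assume "p \<in> {p. c < \<theta> (d (fst p) (snd p))}"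
  hence pc: "c < \<theta> (d (fst p) (snd p))" by simp
  show "\<exists>T. open T \<and> p \<in> T \<and> T \<subseteq> {p. c < \<theta> (d (fst p) (snd p))}"
  proof (cases "c < 0")
    case True
    show ?thesis
    proof (intro exI[of _ UNIV] conjI)
      show "UNIV \<subseteq> {p. c < \<theta> (d (fst p) (snd p))}"
      proof
        fix q :: "'a \<times> 'a"
        have "0 \<le> \<theta> (d (fst q) (snd q))" using tp dpos by blast
        thus "q \<in> {p. c < \<theta> (d (fst p) (snd p))}" using True by simp
      qed
    qed auto
  next
    case False
    define r where "r = d (fst p) (snd p)"
    have "r \<noteq> 0"
    proof
      assume "r = 0" thus False using pc False t0 unfolding r_def by simp
    qed
    hence rpos: "r > 0" using dpos unfolding r_def by (metis order_le_less)
    have cvo: "convex_on {0<..} \<theta>" by (rule convex_on_subset[OF cv]) auto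
    have "continuous_on {0<..} \<theta>" by (rule convex_on_continuous[OF _ cvo]) auto
    hence "isCont \<theta> r" using rpos by (simp add: continuous_on_eq_continuous_at)
    hence "\<theta> \<midarrow>r\<rightarrow> \<theta> r" by (simp add: isCont_def)
    then obtain s where s: "s > 0" "\<forall>x. x \<noteq> r \<and> norm (x - r) < s \<longrightarrow> norm (\<theta> x - \<theta> r) < \<theta> r - c"
      unfolding LIM_eq using pc r_def by (metis diff_gt_0_iff_gt)
    define y where "y = max (r/2) (r - s/2)"
    have y1: "y \<noteq> r \<and> norm (y - r) < s" using s rpos unfolding y_def by auto
    have y0: "0 < y" "y < r" using s rpos unfolding y_def by auto
    have ty: "c < \<theta> y" using s(2)[rule_format, OF y1] by auto
    show ?thesis
    proof (intro exI conjI)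
      show "open {q :: 'a \<times> 'a. y < d (fst q) (snd q)}" using lsc unfolding lsc2_def by blast
      show "p \<in> {q. y < d (fst q) (snd q)}" using y0 r_def by simp
      show "{q. y < d (fst q) (snd q)} \<subseteq> {p. c < \<theta> (d (fst p) (snd p))}"
      proof
        fix q assume "q \<in> {q. y < d (fst q) (snd q)}"
        hence "\<theta> y \<le> \<theta> (d (fst q) (snd q))"
          using th_mono[OF cv t0 tp] y0 by simp
        thus "q \<in> {p. c < \<theta> (d (fst p) (snd p))}" using ty by simp
      qed
    qed
  qed
qed

lemma inf_compact_meas:
  fixes \<theta> :: "real \<Rightarrow> real" and d :: "'a::polish_space \<Rightarrow> 'a \<Rightarrow> real"
  assumes op: "\<And>c. open {p :: 'a \<times> 'a. c < \<theta> (d (fst p) (snd p))}"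
    and tp: "\<forall>x y. 0 \<le> \<theta> (d x y)" and sym: "\<forall>x y. d x y = d y x"
    and K: "compact K" "K \<noteq> {}"
  shows "(\<lambda>z. Inf ((\<lambda>x. \<theta> (d x z)) ` K)) \<in> borel_measurable borel"
proof (subst borel_measurable_iff_greater, intro allI)
  fix a
  define G where "G = (\<lambda>z. Inf ((\<lambda>x. \<theta> (d x z)) ` K))"
  have "open {z. a < G z}"
  proof (subst open_subopen, intro ballI)
    fix z0 assume "z0 \<in> {z. a < G z}"
    hence az: "a < G z0" by simp
    define c where "c = (a + G z0) / 2"
    have "{z0} \<times> K \<subseteq> {p. c < \<theta> (d (fst p) (snd p))}"
    proof
      fix p assume "p \<in> {z0} \<times> K"
      then obtain x where p: "p = (z0, x)" "x \<in> K" by auto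
      have "G z0 \<le> \<theta> (d x z0)" unfolding G_def
        by (rule cInf_lower) (use p tp in \<open>auto intro!: bdd_belowI[of _ 0]\<close>)
      thus "p \<in> {p. c < \<theta> (d (fst p) (snd p))}" using p az sym unfolding c_def by auto
    qed
    from Elementary_Topology.tube_lemma[OF K(1) op this] obtain X0 where X0: "z0 \<in> X0" "open X0"
      "X0 \<times> K \<subseteq> {p. c < \<theta> (d (fst p) (snd p))}" by blast
    show "\<exists>T. open T \<and> z0 \<in> T \<and> T \<subseteq> {z. a < G z}"
    proof (intro exI conjI)
      show "open X0" "z0 \<in> X0" using X0 by auto
      show "X0 \<subseteq> {z. a < G z}"
      proof
        fix z assume z: "z \<in> X0"
        have "c \<le> G z" unfolding G_def
        proof (rule cInf_greatest)
          show "(\<lambda>x. \<theta> (d x z)) ` K \<noteq> {}" using K by auto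
          fix t assume "t \<in> (\<lambda>x. \<theta> (d x z)) ` K"
          then obtain x where "x \<in> K" "t = \<theta> (d x z)" by auto
          thus "c \<le> t" using X0(3) z sym by fastforce
        qed
        thus "z \<in> {z. a < G z}" using az unfolding c_def by simp
      qed
    qed
  qed
  thus "{w \<in> space borel. a < Inf ((\<lambda>x. \<theta> (d x w)) ` K)} \<in> sets borel"
    unfolding G_def by simp
qed



theorem mainTheorem17:
  fixes d :: "'a::polish_space \<Rightarrow> 'a \<Rightarrow> real"
    and \<theta> :: "real \<Rightarrow> real"
    and \<mu> :: "'a measure"
  assumes "is_metric d"
    and "lsc2 d"
    and "convex_on {0..} \<theta>"
    and "\<theta> 0 = 0"
    and "\<forall>t\<ge>0. 0 \<le> \<theta> t"
    and "borel_prob \<mu>"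
    and "\<forall>\<nu>. borel_prob \<nu> \<longrightarrow>
           enn2ereal (transport_cost (\<lambda>x y. \<theta> (d x y)) \<nu> \<mu>) \<le> rel_entropy \<nu> \<mu>"
  shows "property_tau \<mu> (\<lambda>x y. 2 * \<theta> (d x y / 2))"
proof -
  note met = assms(1) and lsc = assms(2) and cv = assms(3) and t0 = assms(4) and tp = assms(5)
    and mu = assms(6) and hyp = assms(7)
  have dpos: "\<forall>x y. 0 \<le> d x y" and d0: "\<forall>x. d x x = 0" and sym: "\<forall>x y. d x y = d y x"
    and tri: "\<forall>x y z. d x z \<le> d x y + d y z"
    using met unfolding is_metric_def by auto
  have tdp: "\<forall>x y. 0 \<le> \<theta> (d x y)" using tp dpos by blast
  have smu: "sets \<mu> = sets borel" and pmu: "prob_space \<mu>" using mu by (auto simp: borel_prob_def)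
  interpret P: prob_space \<mu> by (rule pmu)
  have spmu: "space \<mu> = UNIV" using sets_eq_imp_space_eq[OF smu] by simp
  have op: "\<And>c. open {p :: 'a \<times> 'a. c < \<theta> (d (fst p) (snd p))}"
    by (rule th_lsc[OF cv t0 tp dpos lsc])
  define ct where "ct = (\<lambda>x y. 2 * \<theta> (d x y / 2))"
  have ctri: "\<And>x y z. ct x y \<le> \<theta> (d x z) + \<theta> (d z y)"
  proof -
    fix x y z
    have h1: "d x y / 2 \<le> (d x z + d z y) / 2" using tri by (simp add: divide_right_mono)
    have "\<theta> (d x y / 2) \<le> \<theta> ((d x z + d z y) / 2)"
      by (rule th_mono[OF cv t0 tp _ h1]) (use dpos in simp)
    hence "ct x y \<le> 2 * \<theta> ((d x z + d z y) / 2)" unfolding ct_def by simp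
    also have "\<dots> \<le> \<theta> (d x z) + \<theta> (d z y)" by (rule th_mid[OF cv]) (use dpos in auto)
    finally show "ct x y \<le> \<theta> (d x z) + \<theta> (d z y)" .
  qed
  have ctpos: "\<And>x y. 0 \<le> ct x y" unfolding ct_def using tp dpos by simp
  have ct0: "\<And>x. ct x x = 0" unfolding ct_def using d0 t0 by simp
  show ?thesis unfolding property_tau_def ct_def[symmetric]
  proof (intro allI impI)
    fix f :: "'a \<Rightarrow> real"
    assume "f \<in> borel_measurable borel \<and> bounded (range f)"
    hence fm: "f \<in> borel_measurable borel" and fb: "bounded (range f)" by auto
    obtain M where M: "\<forall>x. \<bar>f x\<bar> \<le> M" using fb unfolding bounded_iff by auto
    have Mpos: "0 \<le> M" using M abs_ge_zero order_trans by blast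
    define Q where "Q = Qc ct f"
    have bddQ: "\<And>x. bdd_below (range (\<lambda>y. f y + ct x y))"
      by (rule bdd_belowI[of _ "-M"]) (use M ctpos in \<open>auto simp: abs_le_iff, smt (verit)\<close>)
    have Qle: "\<And>x y. Q x \<le> f y + ct x y"
      unfolding Q_def Qc_def by (rule cINF_lower[OF bddQ]) simp
    have Qge: "\<And>x. -M \<le> Q x"
      unfolding Q_def Qc_def by (rule cINF_greatest) (use M ctpos in \<open>auto, smt (verit)\<close>)
    have QM: "\<And>x. Q x \<le> M" using Qle[of x x for x] ct0 M by (smt (verit))
    have fmu[measurable]: "f \<in> borel_measurable \<mu>" using fm by (subst measurable_cong_sets[OF smu refl]) simp
    have ief: "integrable \<mu> (\<lambda>x. exp (- f x))"
      by (rule P.integrable_const_bound[where B="exp M"]) (auto intro!: AE_I2, smt (verit) M)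
    define Br where "Br = (\<integral>x. exp (- f x) \<partial>\<mu>)"
    have BrI: "(\<integral>\<^sup>+x. ennreal (exp (- f x)) \<partial>\<mu>) = ennreal Br"
      unfolding Br_def by (rule nn_integral_eq_integral[OF ief]) auto
    have "(\<integral>x. exp (-M) \<partial>\<mu>) \<le> Br" unfolding Br_def
      by (rule integral_mono[OF _ ief]) (auto, smt (verit) M)
    hence "exp (-M) \<le> Br" by (simp add: P.prob_space)
    hence Brpos: "Br > 0" using exp_gt_zero[of "-M"] by linarith
    have key: "(\<integral>\<^sup>+x. g x \<partial>\<mu>) \<le> ennreal (1 / Br)"
      if g: "simple_function \<mu> g" "g \<le> (\<lambda>x. ennreal (exp (Q x)))" "\<forall>x. g x < top" for g
    proof (rule ennreal_le_epsilon)
      fix e :: real assume "ennreal (1 / Br) < top" and epos: "0 < e"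
      have gm[measurable]: "g \<in> borel_measurable \<mu>" by (rule borel_measurable_simple_function[OF g(1)])
      have gmb: "g \<in> borel_measurable borel" using gm by (subst (asm) measurable_cong_sets[OF smu refl])
      have gQ: "\<And>x. g x \<le> ennreal (exp (Q x))" using g(2) by (simp add: le_fun_def)
      define V where "V = g ` UNIV - {0}"
      have finV: "finite V" using g(1) spmu unfolding simple_function_def V_def by auto
      define A where "A = (\<lambda>v. g -` {v})"
      have Asets: "\<And>v. A v \<in> sets borel"
      proof -
        fix v
        have "g -` {v} \<inter> space borel \<in> sets borel" by (rule measurable_sets[OF gmb]) simp
        thus "A v \<in> sets borel" unfolding A_def by simp
      qed
      have Amu: "\<And>v. A v \<in> sets \<mu>" using Asets smu by simp
      define \<eta> where "\<eta> = e / (exp M * (real (card V) + 1))"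
      have etapos: "\<eta> > 0" unfolding \<eta>_def using epos by (simp add: add_pos_nonneg)
      have "\<forall>v\<in>V. \<exists>K. K \<subseteq> A v \<and> compact K \<and> emeasure \<mu> (A v) < emeasure \<mu> K + ennreal \<eta>"
      proof
        fix v assume "v \<in> V"
        have ir: "emeasure \<mu> (A v) = (SUP K \<in> {K. K \<subseteq> A v \<and> compact K}. emeasure \<mu> K)"
          by (rule inner_regular) (use smu Asets in \<open>auto simp: P.emeasure_space_1\<close>)
        have fin: "emeasure \<mu> (A v) \<noteq> \<infinity>" using P.emeasure_finite by (simp add: top_ennreal.rep_eq less_top)
        have ne: "{K. K \<subseteq> A v \<and> compact K} \<noteq> {}" by auto
        from SUP_approx_ennreal[OF etapos ne ir fin]
        show "\<exists>K. K \<subseteq> A v \<and> compact K \<and> emeasure \<mu> (A v) < emeasure \<mu> K + ennreal \<eta>"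
          by blast
      qed
      then obtain K where K: "\<forall>v\<in>V. K v \<subseteq> A v \<and> compact (K v) \<and> emeasure \<mu> (A v) < emeasure \<mu> (K v) + ennreal \<eta>"
        by metis
      have Ksets: "\<And>v. v \<in> V \<Longrightarrow> K v \<in> sets borel" using K by (auto intro: borel_closed compact_imp_closed)
      define S where "S = (\<Union>v\<in>V. K v)"
      have "closed S" unfolding S_def using K finV by (auto intro!: closed_UN compact_imp_closed)
      hence Ssets[measurable]: "S \<in> sets borel" by (rule borel_closed)
      have Smu[measurable]: "S \<in> sets \<mu>" using Ssets smu by simp
      have xS: "\<And>x. x \<in> S \<Longrightarrow> g x \<in> V \<and> x \<in> K (g x)"
      proof -
        fix x assume "x \<in> S"
        then obtain v where v: "v \<in> V" "x \<in> K v" unfolding S_def by auto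
        hence "g x = v" using K unfolding A_def by auto
        thus "g x \<in> V \<and> x \<in> K (g x)" using v by simp
      qed
      have KS: "\<And>v. v \<in> V \<Longrightarrow> K v \<subseteq> S" unfolding S_def by auto
      have KA: "\<And>v x. v \<in> V \<Longrightarrow> x \<in> K v \<Longrightarrow> g x = v" using K unfolding A_def by auto
      have Vr: "\<And>v. v \<in> V \<Longrightarrow> v = ennreal (enn2real v) \<and> 0 < enn2real v"
      proof -
        fix v assume v: "v \<in> V"
        hence "v \<noteq> 0" "v < top" using g(3) unfolding V_def by auto
        thus "v = ennreal (enn2real v) \<and> 0 < enn2real v"
          by (cases v) (auto simp: ennreal_eq_0_iff)
      qed
      have lnQ: "\<And>x. x \<in> S \<Longrightarrow> ln (enn2real (g x)) \<le> Q x"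
      proof -
        fix x assume "x \<in> S"
        hence gv: "g x \<in> V" using xS by blast
        have r: "g x = ennreal (enn2real (g x))" "0 < enn2real (g x)" using Vr[OF gv] by auto
        have "ennreal (enn2real (g x)) \<le> ennreal (exp (Q x))" using gQ[of x] r(1) by simp
        hence "enn2real (g x) \<le> exp (Q x)" by (simp add: ennreal_le_iff)
        hence "ln (enn2real (g x)) \<le> ln (exp (Q x))" using r(2) by (subst ln_le_cancel_iff) auto
        thus "ln (enn2real (g x)) \<le> Q x" by simp
      qed
      define V2 where "V2 = {v\<in>V. K v \<noteq> {}}"
      have finV2: "finite (insert 0 V2)" using finV unfolding V2_def by simp
      define k where "k = (\<lambda>x. if x \<in> S then max (-M) (ln (enn2real (g x))) else -M)"
      define T where "T = (\<lambda>v z. if v = 0 then -M else ln (enn2real v) - Inf ((\<lambda>x. \<theta> (d x z)) ` K v))"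
      define h where "h = (\<lambda>z. Max ((\<lambda>v. T v z) ` insert 0 V2))"
      have kle: "\<And>x. k x \<le> Q x" unfolding k_def using lnQ Qge by auto
      have kb: "\<forall>x. \<bar>k x\<bar> \<le> M"
      proof
        fix x have "-M \<le> k x" unfolding k_def by auto
        thus "\<bar>k x\<bar> \<le> M" using kle[of x] QM[of x] by linarith
      qed
      have km: "k \<in> borel_measurable borel" unfolding k_def using gmb Ssets by measurable
      have Tm: "\<And>v. v \<in> insert 0 V2 \<Longrightarrow> T v \<in> borel_measurable borel"
      proof -
        fix v assume v: "v \<in> insert 0 V2"
        show "T v \<in> borel_measurable borel"
        proof (cases "v = 0")
          case True thus ?thesis unfolding T_def by simp
        next
          case False
          hence "v \<in> V2" using v by simp
          hence "compact (K v)" "K v \<noteq> {}" using K unfolding V2_def by auto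
          from inf_compact_meas[OF op tdp sym this]
          show ?thesis unfolding T_def using False by measurable
        qed
      qed
      have hm: "h \<in> borel_measurable borel" unfolding h_def
        by (rule borel_measurable_Max[OF finV2 Tm])
      have Tle: "\<And>v z. v \<in> insert 0 V2 \<Longrightarrow> T v z \<le> h z" unfolding h_def
        using finV2 by (intro Max_ge) auto
      have hii: "\<And>x z. h z \<le> f x + \<theta> (d x z)"
      proof -
        fix x z
        show "h z \<le> f x + \<theta> (d x z)" unfolding h_def
        proof (subst Max_le_iff)
          show "finite ((\<lambda>v. T v z) ` insert 0 V2)" using finV2 by simp
          show "(\<lambda>v. T v z) ` insert 0 V2 \<noteq> {}" by simp
          show "\<forall>a\<in>(\<lambda>v. T v z) ` insert 0 V2. a \<le> f x + \<theta> (d x z)"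
          proof
            fix a assume "a \<in> (\<lambda>v. T v z) ` insert 0 V2"
            then obtain v where v: "v \<in> insert 0 V2" "a = T v z" by auto
            show "a \<le> f x + \<theta> (d x z)"
            proof (cases "v = 0")
              case True thus ?thesis using v M[rule_format, of x] tdp[rule_format, of x z]
                unfolding T_def by (simp add: abs_le_iff)
            next
              case False
              hence vV: "v \<in> V" "K v \<noteq> {}" using v unfolding V2_def by auto
              have "ln (enn2real v) - f x - \<theta> (d x z) \<le> Inf ((\<lambda>x. \<theta> (d x z)) ` K v)"
              proof (rule cInf_greatest)
                show "(\<lambda>x. \<theta> (d x z)) ` K v \<noteq> {}" using vV by simp
                fix t assume "t \<in> (\<lambda>x. \<theta> (d x z)) ` K v"
                then obtain x' where x': "x' \<in> K v" "t = \<theta> (d x' z)" by auto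
                have "x' \<in> S" using KS[OF vV(1)] x' by auto
                hence "ln (enn2real v) \<le> Q x'" using lnQ KA[OF vV(1) x'(1)] by metis
                also have "\<dots> \<le> f x + ct x' x" by (rule Qle)
                also have "\<dots> \<le> f x + (\<theta> (d x' z) + \<theta> (d z x))" using ctri[of x' x z] by simp
                finally show "ln (enn2real v) - f x - \<theta> (d x z) \<le> t" using x'(2) sym by simp
              qed
              thus ?thesis using v False unfolding T_def by simp
            qed
          qed
        qed
      qed
      have hb: "\<forall>z. \<bar>h z\<bar> \<le> M"
      proof
        fix z
        have "-M \<le> h z" using Tle[of 0 z] unfolding T_def by simp
        moreover have "h z \<le> M" using hii[of z z] d0 t0 M by (smt (verit))
        ultimately show "\<bar>h z\<bar> \<le> M" by linarith
      qed
      have hbm: "\<forall>z. \<bar>- h z\<bar> \<le> M" using hb by simp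
      have hi: "\<forall>x z. k x + - h z \<le> \<theta> (d x z)"
      proof (intro allI)
        fix x z
        have hz: "-M \<le> h z" using Tle[of 0 z] unfolding T_def by simp
        show "k x + - h z \<le> \<theta> (d x z)"
        proof (cases "x \<in> S")
          case False thus ?thesis using hz tdp unfolding k_def by (smt (verit))
        next
          case True
          then have gv: "g x \<in> V" "x \<in> K (g x)" using xS by auto
          hence gV2: "g x \<in> V2" unfolding V2_def by auto
          have g0: "g x \<noteq> 0" using gv unfolding V_def by auto
          have "Inf ((\<lambda>x. \<theta> (d x z)) ` K (g x)) \<le> \<theta> (d x z)"
            by (rule cInf_lower) (use gv tdp in \<open>auto intro!: bdd_belowI[of _ 0]\<close>)
          hence "ln (enn2real (g x)) - \<theta> (d x z) \<le> T (g x) z" unfolding T_def using g0 by simp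
          also have "\<dots> \<le> h z" using Tle gV2 by simp
          finally have "ln (enn2real (g x)) \<le> h z + \<theta> (d x z)" by simp
          moreover have "-M \<le> h z + \<theta> (d x z)" using hz tdp by (smt (verit))
          ultimately show ?thesis using True unfolding k_def by simp
        qed
      qed
      have L1: "(\<integral>x. exp (k x) \<partial>\<mu>) \<le> exp (- (\<integral>z. - h z \<partial>\<mu>))"
        by (rule lemA[OF tp dpos mu hyp km _ kb hbm hi]) (use hm in measurable)
      have hii': "\<forall>x z. - f x + h z \<le> \<theta> (d x z)" using hii by (smt (verit))
      have fbm: "\<forall>x. \<bar>- f x\<bar> \<le> M" using M by simp
      have L2: "(\<integral>x. exp (- f x) \<partial>\<mu>) \<le> exp (- (\<integral>z. h z \<partial>\<mu>))"
        by (rule lemA[OF tp dpos mu hyp _ hm fbm hb hii']) (use fm in measurable)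
      define Ik where "Ik = (\<integral>x. exp (k x) \<partial>\<mu>)"
      have L1': "Ik \<le> exp (\<integral>z. h z \<partial>\<mu>)" using L1 unfolding Ik_def by simp
      have Ikpos: "0 \<le> Ik" unfolding Ik_def by simp
      have "Ik * Br \<le> exp (\<integral>z. h z \<partial>\<mu>) * exp (- (\<integral>z. h z \<partial>\<mu>))"
        using L1' L2 Ikpos Brpos unfolding Br_def by (intro mult_mono) auto
      also have "\<dots> = 1" by (simp flip: exp_add)
      finally have "Ik * Br \<le> 1" .
      hence Ik1: "Ik \<le> 1 / Br" using Brpos by (simp add: field_simps)
      have kmu[measurable]: "k \<in> borel_measurable \<mu>" using km by (subst measurable_cong_sets[OF smu refl]) simp
      have iek: "integrable \<mu> (\<lambda>x. exp (k x))"
        by (rule P.integrable_const_bound[where B="exp M"]) (auto intro!: AE_I2, smt (verit) kb)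
      have IkI: "(\<integral>\<^sup>+x. ennreal (exp (k x)) \<partial>\<mu>) = ennreal Ik"
        unfolding Ik_def by (rule nn_integral_eq_integral[OF iek]) auto
      have split: "(\<integral>\<^sup>+x. g x \<partial>\<mu>) = (\<integral>\<^sup>+x. g x * indicator S x \<partial>\<mu>) + (\<integral>\<^sup>+x. g x * indicator (- S) x \<partial>\<mu>)"
      proof -
        have "(\<integral>\<^sup>+x. g x \<partial>\<mu>) = (\<integral>\<^sup>+x. g x * indicator S x + g x * indicator (- S) x \<partial>\<mu>)"
          by (intro nn_integral_cong) (simp split: split_indicator)
        also have "\<dots> = (\<integral>\<^sup>+x. g x * indicator S x \<partial>\<mu>) + (\<integral>\<^sup>+x. g x * indicator (- S) x \<partial>\<mu>)"
          by (rule nn_integral_add) measurable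
        finally show ?thesis .
      qed
      have p1: "(\<integral>\<^sup>+x. g x * indicator S x \<partial>\<mu>) \<le> ennreal Ik"
        unfolding IkI[symmetric]
      proof (rule nn_integral_mono)
        fix x
        show "g x * indicator S x \<le> ennreal (exp (k x))"
        proof (cases "x \<in> S")
          case True
          hence gv: "g x \<in> V" using xS by blast
          have r: "g x = ennreal (enn2real (g x))" "0 < enn2real (g x)" using Vr[OF gv] by auto
          have "enn2real (g x) = exp (ln (enn2real (g x)))" using r(2) by simp
          also have "\<dots> \<le> exp (k x)" unfolding k_def using True by simp
          finally have "ennreal (enn2real (g x)) \<le> ennreal (exp (k x))" by (rule ennreal_leI)
          thus ?thesis using True r(1) by simp
        qed simp
      qed
      have mD: "\<And>v. v \<in> V \<Longrightarrow> emeasure \<mu> (A v - K v) \<le> ennreal \<eta>"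
      proof -
        fix v assume v: "v \<in> V"
        have KAv: "K v \<subseteq> A v" "K v \<in> sets \<mu>" using K v Ksets[OF v] smu by auto
        have "ennreal (measure \<mu> (A v)) < ennreal (measure \<mu> (K v) + \<eta>)"
          using K v etapos by (simp add: P.emeasure_eq_measure ennreal_plus)
        hence "measure \<mu> (A v) < measure \<mu> (K v) + \<eta>"
          by (subst (asm) ennreal_less_iff) auto
        moreover have "measure \<mu> (A v - K v) = measure \<mu> (A v) - measure \<mu> (K v)"
          by (rule P.finite_measure_Diff[OF Amu KAv(2) KAv(1)])
        ultimately have "measure \<mu> (A v - K v) \<le> \<eta>" by simp
        thus "emeasure \<mu> (A v - K v) \<le> ennreal \<eta>" by (simp add: P.emeasure_eq_measure ennreal_leI)
      qed
      have DKmu: "\<And>v. v \<in> V \<Longrightarrow> A v - K v \<in> sets \<mu>" using Amu Ksets smu by auto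
      have DKm: "(\<lambda>x. ennreal (exp M) * indicator (A v - K v) x) \<in> borel_measurable \<mu>" if "v \<in> V" for v
      proof -
        have [measurable]: "A v - K v \<in> sets \<mu>" using DKmu[OF that] .
        show ?thesis by measurable
      qed
      have p2: "(\<integral>\<^sup>+x. g x * indicator (- S) x \<partial>\<mu>) \<le> ennreal e"
      proof -
        have "(\<integral>\<^sup>+x. g x * indicator (- S) x \<partial>\<mu>) \<le>
            (\<integral>\<^sup>+x. (\<Sum>v\<in>V. ennreal (exp M) * indicator (A v - K v) x) \<partial>\<mu>)"
        proof (rule nn_integral_mono)
          fix x
          show "g x * indicator (- S) x \<le> (\<Sum>v\<in>V. ennreal (exp M) * indicator (A v - K v) x)"
          proof (cases "x \<notin> S \<and> g x \<noteq> 0")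
            case True
            hence gv: "g x \<in> V" unfolding V_def by auto
            have xA: "x \<in> A (g x) - K (g x)" using True KS[OF gv] unfolding A_def by auto
            have "g x \<le> ennreal (exp M)" using gQ[of x] QM[of x] order_trans by fastforce
            also have "\<dots> = ennreal (exp M) * indicator (A (g x) - K (g x)) x" using xA by simp
            also have "\<dots> \<le> (\<Sum>v\<in>V. ennreal (exp M) * indicator (A v - K v) x)"
              by (rule member_le_sum[OF gv _ finV]) simp
            finally show ?thesis using True by simp
          next
            case False thus ?thesis by (auto split: split_indicator)
          qed
        qed
        also have "\<dots> = (\<Sum>v\<in>V. ennreal (exp M) * emeasure \<mu> (A v - K v))"
          by (subst nn_integral_sum) (auto intro!: sum.cong nn_integral_cmult_indicator DKmu DKm)
        also have "\<dots> \<le> (\<Sum>v\<in>V. ennreal (exp M) * ennreal \<eta>)"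
          by (intro sum_mono mult_left_mono mD) auto
        also have "\<dots> = ennreal (real (card V) * (exp M * \<eta>))"
          using etapos by (simp add: ennreal_of_nat_eq_real_of_nat flip: ennreal_mult)
        also have "\<dots> \<le> ennreal e"
        proof (rule ennreal_leI)
          have pos: "exp M * (real (card V) + 1) > 0" by (intro mult_pos_pos) auto
          have eq: "exp M * (real (card V) + 1) * \<eta> = e" unfolding \<eta>_def using pos by simp
          have "real (card V) * (exp M * \<eta>) \<le> (real (card V) + 1) * (exp M * \<eta>)"
            using etapos by (intro mult_right_mono) auto
          also have "\<dots> = e" using eq by (simp add: algebra_simps)
          finally show "real (card V) * (exp M * \<eta>) \<le> e" by simp
        qed
        finally show ?thesis .
      qed
      have "(\<integral>\<^sup>+x. g x \<partial>\<mu>) \<le> ennreal Ik + ennreal e" unfolding split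
        by (intro add_mono p1 p2)
      also have "\<dots> \<le> ennreal (1 / Br) + ennreal e" using Ik1 by (intro add_mono ennreal_leI) auto
      finally show "(\<integral>\<^sup>+x. g x \<partial>\<mu>) \<le> ennreal (1 / Br) + ennreal e" .
    qed
    have "(\<integral>\<^sup>+x. ennreal (exp (Q x)) \<partial>\<mu>) \<le> ennreal (1 / Br)"
      unfolding nn_integral_def_finite
    proof (rule SUP_least)
      fix g assume "g \<in> {g. simple_function \<mu> g \<and> g \<le> (\<lambda>x. ennreal (exp (Q x))) \<and> (\<forall>x. g x < top)}"
      hence g: "simple_function \<mu> g" "g \<le> (\<lambda>x. ennreal (exp (Q x)))" "\<forall>x. g x < top" by auto
      show "integral\<^sup>S \<mu> g \<le> ennreal (1 / Br)"
        using key[OF g] nn_integral_eq_simple_integral[OF g(1)] by simp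
    qed
    hence "(\<integral>\<^sup>+x. ennreal (exp (Q x)) \<partial>\<mu>) * ennreal Br \<le> ennreal (1 / Br) * ennreal Br"
      by (rule mult_right_mono) simp
    also have "\<dots> = 1" using Brpos by (simp flip: ennreal_mult)
    finally show "(\<integral>\<^sup>+x. ennreal (exp (Qc ct f x)) \<partial>\<mu>) * (\<integral>\<^sup>+x. ennreal (exp (- f x)) \<partial>\<mu>) \<le> 1"
      unfolding BrI Q_def .
  qed
qed

end
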